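(* Consider $\mathbb{Z}$ with the metric $d(x,y)=|x-y|$ and the $c_1$-adjacency (i.e., $x,y$ are adjacent iff $|x-y|=1$). Let $S,T:\mathbb{Z}\to\mathbb{Z}$ be such that $x\neq y$ implies $d(S(x),S(y))<d(T(x),T(y))$. If $T$ is $c_1$-continuous, then $S$ is a constant function.
   Context: A function $f:(X,\kappa)\to(Y,\lambda)$ between digital images (sets of lattice points with adjacency relations) is $(\kappa,\lambda)$-continuous iff whenever $x$ and $x'$ are $\kappa$-adjacent in $X$, either $f(x)=f(x')$ or $f(x)$ and $f(x')$ are $\lambda$-adjacent in $Y$. Here $c_1$-continuous means $(c_1,c_1)$-continuous. *)

theory Defs
  imports Main
begin

definition c1_adj :: "int \<Rightarrow> int \<Rightarrow> bool" where
  "c1_adj x y \<longleftrightarrow> \<bar>x - y\<bar> = 1"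

definition c1_continuous :: "(int \<Rightarrow> int) \<Rightarrow> bool" where
  "c1_continuous f \<longleftrightarrow>
     (\<forall>x x'. c1_adj x x' \<longrightarrow> f x = f x' \<or> c1_adj (f x) (f x'))"

end

theory Submission
  imports Defs
begin

theorem proposition6p4:
  fixes S T :: "int \<Rightarrow> int"
  assumes contr: "\<And>x y. x \<noteq> y \<Longrightarrow> \<bar>S x - S y\<bar> < \<bar>T x - T y\<bar>"
    and cont: "c1_continuous T"
  shows "\<exists>c. \<forall>x. S x = c"
proof -
  have step: "S (x+1) = S x" for x
  proof -
    have "c1_adj (x+1) x" by (simp add: c1_adj_def)
    then have "T (x+1) = T x \<or> c1_adj (T (x+1)) (T x)" using cont unfolding c1_continuous_def by blast
    then have "\<bar>T (x+1) - T x\<bar> \<le> 1" by (auto simp: c1_adj_def)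
    moreover have "\<bar>S (x+1) - S x\<bar> < \<bar>T (x+1) - T x\<bar>" using contr[of "x+1" x] by simp
    ultimately show ?thesis by linarith
  qed
  have "S x = S 0" for x
  proof (induct x rule: int_induct[where k=0])
    case base then show ?case by simp
  next
    case (step1 i) then show ?case using step[of i] by simp
  next
    case (step2 i) then show ?case using step[of "i-1"] by simp
  qed
  then show ?thesis by blast
qed

end
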